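(* Let $\tau$ be a veering triangulation of $M$ with $AB$-cycles $c_1,\dots,c_n$ of lengths $k_1,\dots,k_n$ and classes $g_i=[c_i]\in G$. Then $$\mathcal{AB}(\tilde\tau)\cong\bigoplus_{i=1}^n\frac{\mathbb{Z}[G]}{\left(1+(-1)^{k_i+1}g_i\right)},$$ where the $i$th summand's generator maps to a fixed (lifted) face of $c_i$, and consequently, up to a unit of $\mathbb{Z}[G]$, $$V^{\mathcal{AB}}_\tau=\prod_{i=1}^n\left(1+(-1)^{k_i+1}g_i\right).$$
   Context: $\tau$ is a veering triangulation of $M$ (taut ideal triangulation with cooriented faces, each tetrahedron having two bottom and two top faces, a bottom edge, a top edge and four side edges, angle sum $2\pi$ around edges, with a consistent right/left veer on edges modelled on a thickened rhombus whose side edges of positive slope are right-veering and of negative slope left-veering); $F$ its set of faces. $G=H_1(M;\mathbb{Z})/\mathrm{torsion}$ (multiplicative), $\hat M$ the cover with deck group $G$, $\tilde\tau$ the lift. For a face $f$, let $t$ be the tetrahedron having $f$ as a bottom face; $A(f)$ is the top face of $t$ meeting $f$ along the edge of $t$ having the same veer as the top edge of $t$. $A:F\to F$ is a permutation; its cycles are the $AB$-cycles; the length of a cycle is the number of faces in it; each $AB$-cycle determines a directed closed curve in $M$ (crossing its faces in order through the corresponding tetrahedra) and hence a class $[c]\in G$. Lifting to $\hat M$ and choosing lifts of faces, $A$ induces a $\mathbb{Z}[G]$-linear map $A:\mathbb{Z}[G]^F\to\mathbb{Z}[G]^F$ (a lifted face maps to the corresponding top face of the lifted tetrahedron above it). $L^{\mathcal{AB}}=I+A$,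 $\mathcal{AB}(\tilde\tau)=\mathrm{coker}(L^{\mathcal{AB}})$, and $V^{\mathcal{AB}}_\tau=\det L^{\mathcal{AB}}$. *)

theory Defs
  imports "HOL-Analysis.Analysis" "HOL-Library.Poly_Mapping"
begin

text \<open>Group ring Z[G] of an abelian group G (written additively here, so the
  group element g corresponds to the monomial Poly_Mapping.single g 1).\<close>

type_synonym 'g grpring = "'g \<Rightarrow>\<^sub>0 int"

definition grp_elt :: "'g::ab_group_add \<Rightarrow> 'g grpring" where
  "grp_elt g = Poly_Mapping.single g 1"

text \<open>Faces form the finite type 'f; A is the AB-permutation of faces.
  lft f is the deck transformation such that, for the chosen lifts of faces, the
  chosen lift of f is mapped by the lifted A to the translate (lft f) of the chosen lift
  of A f.  The matrix of the Z[G]-linear map A (acting on column vectors,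
  column j = image of the basis vector of face j).\<close>

definition AB_matrix :: "('f::finite \<Rightarrow> 'f) \<Rightarrow> ('f \<Rightarrow> 'g::ab_group_add) \<Rightarrow> 'g grpring ^'f^'f" where
  "AB_matrix A lft = (\<chi> i j. if i = A j then grp_elt (lft j) else 0)"

definition L_AB :: "('f::finite \<Rightarrow> 'f) \<Rightarrow> ('f \<Rightarrow> 'g::ab_group_add) \<Rightarrow> 'g grpring ^'f^'f" where
  "L_AB A lft = mat 1 + AB_matrix A lft"

definition AB_cycle :: "('f \<Rightarrow> 'f) \<Rightarrow> 'f \<Rightarrow> 'f set" where
  "AB_cycle A f = {(A ^^ n) f | n. True}"

definition AB_cycles :: "('f \<Rightarrow> 'f) \<Rightarrow> 'f set set" where
  "AB_cycles A = range (AB_cycle A)"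

text \<open>The class [c] in G of a cycle: the total deck translation accumulated going once
  around the cycle.\<close>

definition cycle_class :: "('f \<Rightarrow> 'g::ab_group_add) \<Rightarrow> 'f set \<Rightarrow> 'g" where
  "cycle_class lft c = (\<Sum>x\<in>c. lft x)"

definition cycle_relator :: "('f \<Rightarrow> 'g::ab_group_add) \<Rightarrow> 'f set \<Rightarrow> 'g grpring" where
  "cycle_relator lft c = 1 + (-1) ^ (card c + 1) * grp_elt (cycle_class lft c)"

definition basis_vec :: "'f::finite \<Rightarrow> 'a::zero \<Rightarrow> 'a ^'f" where
  "basis_vec f r = (\<chi> i. if i = f then r else 0)"

definition in_image :: "'a::comm_ring_1 ^'f::finite^'f \<Rightarrow> 'a ^'f \<Rightarrow> bool" where
  "in_image L v \<longleftrightarrow> (\<exists>w. L *v w = v)"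

end

theory Submission
  imports Defs "HOL-Combinatorics.Orbits"
begin

locale ABs =
  fixes A :: "'f::finite \<Rightarrow> 'f" and lft :: "'f \<Rightarrow> 'g::ab_group_add" and rep :: "'f set \<Rightarrow> 'f"
  assumes bijA: "bij A" and repc: "\<forall>c\<in>AB_cycles A. rep c \<in> c"
begin

definition "cyc i = AB_cycle A i"
definition "isrep i \<longleftrightarrow> i = rep (cyc i)"
definition "B = inv A"
definition "pt c m = (A ^^ m) (rep c)"
definition "idx i = funpow_dist A (rep (cyc i)) i"
definition "g i = grp_elt (lft i)"
definition "P c m = grp_elt (\<Sum>n<m. lft (pt c n))"
definition "coef i = (-1) ^ (idx i) * P (cyc i) (idx i)"

lemma permA: "permutation A"
proof -
  have "A permutes UNIV" using bijA by (rule bij_imp_permutes) simp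
  then show ?thesis by (auto simp: permutation_permutes)
qed

lemma cyc_orbit: "cyc i = orbit A i"
  using orbit_altdef_permutation[OF permA] by (simp add: cyc_def AB_cycle_def)

lemma in_cyc: "i \<in> cyc i"
  by (simp add: cyc_orbit permA permutation_self_in_orbit)

lemma cyc_eq: "j \<in> cyc i \<Longrightarrow> cyc j = cyc i"
  using cyclic_on_orbit'[OF permA, of i] unfolding cyc_orbit cyclic_on_alldef by auto

lemma cycles_cyc: "c \<in> AB_cycles A \<longleftrightarrow> (\<exists>i. c = cyc i)"
  by (auto simp: AB_cycles_def cyc_def)

lemma rep_in: "c \<in> AB_cycles A \<Longrightarrow> rep c \<in> c"
  using repc by auto

lemma cyc_rep: "c \<in> AB_cycles A \<Longrightarrow> cyc (rep c) = c"
  using rep_in cyc_eq cycles_cyc by metis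

lemma cyc_in: "cyc i \<in> AB_cycles A"
  using cycles_cyc by auto

lemma cyc_rep_cyc: "cyc (rep (cyc i)) = cyc i"
  using cyc_rep cyc_in by blast

definition "k c = card c"

lemma cyc_param:
  assumes c: "c \<in> AB_cycles A"
  shows "(A ^^ k c) (rep c) = rep c" "0 < k c" "inj_on (pt c) {0..<k c}" "pt c ` {0..<k c} = c"
proof -
  let ?r = "rep c"
  have o: "?r \<in> orbit A ?r" by (simp add: permA permutation_self_in_orbit)
  have ceq: "c = orbit A ?r" using cyc_rep[OF c] cyc_orbit by metis
  have im: "pt c ` {0..<funpow_dist1 A ?r ?r} = c"
    using orbit_conv_funpow_dist1[OF o] ceq by (simp add: pt_def)
  have inj: "inj_on (pt c) {0..<funpow_dist1 A ?r ?r}"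
    using inj_on_funpow_dist1[OF o] by (simp add: pt_def[abs_def])
  have kk: "k c = funpow_dist1 A ?r ?r"
    using im inj card_image by (metis card_atLeastLessThan diff_zero k_def)
  show "(A ^^ k c) (rep c) = rep c" using funpow_dist1_prop[OF o] kk by simp
  show "0 < k c" using kk by simp
  show "inj_on (pt c) {0..<k c}" using inj kk by simp
  show "pt c ` {0..<k c} = c" using im kk by simp
qed

lemma idx_prop: "idx i < k (cyc i)" "pt (cyc i) (idx i) = i"
proof -
  let ?c = "cyc i"
  have c: "?c \<in> AB_cycles A" by (rule cyc_in)
  have "i \<in> pt ?c ` {0..<k ?c}" using cyc_param(4)[OF c] in_cyc by auto
  then obtain m where m: "m < k ?c" "(A ^^ m) (rep ?c) = i" by (auto simp: pt_def)
  have le: "idx i \<le> m" unfolding idx_def funpow_dist_def using m(2) by (rule Least_le)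
  have "(A ^^ idx i) (rep ?c) = i" unfolding idx_def funpow_dist_def using m(2) by (rule LeastI)
  then show "pt ?c (idx i) = i" by (simp add: pt_def)
  show "idx i < k ?c" using le m by simp
qed

lemma pt_in: "c \<in> AB_cycles A \<Longrightarrow> pt c m \<in> c"
proof -
  assume c: "c \<in> AB_cycles A"
  have "pt c m \<in> orbit A (rep c)" unfolding pt_def
    by (simp add: funpow_in_orbit permA permutation_self_in_orbit)
  then show ?thesis using cyc_rep[OF c] cyc_orbit by metis
qed

lemma cyc_pt: "c \<in> AB_cycles A \<Longrightarrow> cyc (pt c m) = c"
  using pt_in cyc_eq cyc_rep by metis

lemma idx_pt: assumes c: "c \<in> AB_cycles A" and m: "m < k c" shows "idx (pt c m) = m"
proof -
  have "pt c (idx (pt c m)) = pt c m" "idx (pt c m) < k c"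
    using idx_prop[of "pt c m"] cyc_pt[OF c] by auto
  then show ?thesis using cyc_param(3)[OF c] m by (auto dest: inj_onD)
qed

lemma AB: "A (B i) = i" "B (A i) = i"
  using bijA by (auto simp: B_def bij_is_surj surj_f_inv_f bij_is_inj inv_f_f)

lemma A_pt: "A (pt c m) = pt c (Suc m)" by (simp add: pt_def)

lemma B_pt: "B (pt c (Suc m)) = pt c m" by (metis A_pt AB(2))

lemma B_rep: assumes c: "c \<in> AB_cycles A" shows "B (rep c) = pt c (k c - 1)"
proof -
  have "pt c (Suc (k c - 1)) = rep c" using cyc_param(1,2)[OF c] by (simp add: pt_def)
  then show ?thesis by (metis B_pt)
qed

lemma pt0: "pt c 0 = rep c" by (simp add: pt_def)

lemma grp_elt_add: "grp_elt (a + b) = grp_elt a * grp_elt b"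
  by (simp add: grp_elt_def mult_single)

lemma grp_elt_0: "grp_elt 0 = 1"
  by (simp add: grp_elt_def)

lemma P0: "P c 0 = 1" by (simp add: P_def grp_elt_0)

lemma PSuc: "P c (Suc m) = P c m * g (pt c m)"
  by (simp add: P_def g_def grp_elt_add)

lemma Pk: assumes c: "c \<in> AB_cycles A" shows "P c (k c) = grp_elt (cycle_class lft c)"
proof -
  have "(\<Sum>n<k c. lft (pt c n)) = (\<Sum>x\<in>c. lft x)"
    using sum.reindex[OF cyc_param(3)[OF c], of lft] cyc_param(4)[OF c]
    by (simp add: lessThan_atLeast0)
  then show ?thesis by (simp add: P_def cycle_class_def)
qed

lemma Lmult: "(L_AB A lft *v w) $ i = w $ i + g (B i) * w $ (B i)"
proof -
  have "(L_AB A lft *v w) $ i = (\<Sum>j\<in>UNIV. ((if i = j then 1 else 0) + (if i = A j then grp_elt (lft j) else 0)) * w $ j)"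
    by (simp add: L_AB_def AB_matrix_def matrix_vector_mult_def mat_def)
  also have "\<dots> = (\<Sum>j\<in>UNIV. (if i = j then w $ j else 0)) + (\<Sum>j\<in>UNIV. (if j = B i then g (B i) * w $ (B i) else 0))"
    by (subst sum.distrib[symmetric], rule sum.cong) (auto simp: distrib_right g_def AB, metis AB(2))
  also have "\<dots> = w $ i + g (B i) * w $ (B i)" by simp
  finally show ?thesis .
qed

lemma rhs_comp: "(\<Sum>c\<in>AB_cycles A. basis_vec (rep c) (a c)) $ i = (if isrep i then a (cyc i) else 0)"
proof -
  have "(\<Sum>c\<in>AB_cycles A. basis_vec (rep c) (a c)) $ i = (\<Sum>c\<in>AB_cycles A. if c = cyc i then (if isrep i then a (cyc i) else 0) else 0)"
    unfolding sum_component
  proof (rule sum.cong)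
    fix c assume c: "c \<in> AB_cycles A"
    show "basis_vec (rep c) (a c) $ i = (if c = cyc i then (if isrep i then a (cyc i) else 0) else 0)"
      using cyc_rep[OF c] by (auto simp: basis_vec_def isrep_def)
  qed simp
  also have "\<dots> = (if isrep i then a (cyc i) else 0)"
    using cyc_in by simp
  finally show ?thesis .
qed

lemma icases:
  obtains (r) "isrep i" "i = rep (cyc i)" "idx i = 0" "B i = pt (cyc i) (k (cyc i) - 1)"
     "idx (B i) = k (cyc i) - 1" "cyc (B i) = cyc i"
  | (s) m where "\<not> isrep i" "i = pt (cyc i) (Suc m)" "idx i = Suc m" "B i = pt (cyc i) m"
     "idx (B i) = m" "cyc (B i) = cyc i"
proof -
  let ?c = "cyc i"
  have c: "?c \<in> AB_cycles A" by (rule cyc_in)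
  have kp: "0 < k ?c" by (rule cyc_param(2)[OF c])
  show ?thesis
  proof (cases "idx i")
    case 0
    then have i: "i = rep ?c" using idx_prop(2)[of i] by (simp add: pt0)
    have Bi: "B i = pt ?c (k ?c - 1)" using B_rep[OF c] i by simp
    show ?thesis
      apply (rule r)
      using i 0 Bi idx_pt[OF c, of "k ?c - 1"] cyc_pt[OF c] kp by (auto simp: isrep_def)
  next
    case (Suc m)
    then have i: "i = pt ?c (Suc m)" using idx_prop(2)[of i] by simp
    have mk: "m < k ?c" using idx_prop(1)[of i] Suc by simp
    have nr: "\<not> isrep i"
    proof
      assume "isrep i"
      then have "i = pt ?c 0" by (simp add: isrep_def pt0)
      then have "idx i = 0" using idx_pt[OF c kp] by simp
      with Suc show False by simp
    qed
    show ?thesis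
      apply (rule s[of m])
      using nr i Suc B_pt[of ?c m] idx_pt[OF c mk] cyc_pt[OF c, of m] by auto
  qed
qed

lemma relator_eq: assumes c: "c \<in> AB_cycles A"
  shows "cycle_relator lft c = 1 + (-1) ^ (k c - 1) * (P c (k c - 1) * g (pt c (k c - 1)))"
proof -
  have kp: "k c = Suc (k c - 1)" using cyc_param(2)[OF c] by simp
  have "P c (k c) = P c (k c - 1) * g (pt c (k c - 1))" by (subst kp, simp add: PSuc)
  moreover have "(-1::'g grpring) ^ (card c + 1) = (-1) ^ (k c - 1)"
    by (subst k_def[symmetric], subst kp) simp
  ultimately show ?thesis using Pk[OF c] by (simp add: cycle_relator_def)
qed

primrec Wv :: "'g grpring ^'f \<Rightarrow> 'f set \<Rightarrow> nat \<Rightarrow> 'g grpring" where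
  "Wv v c 0 = 0"
| "Wv v c (Suc m) = v $ pt c (Suc m) - g (pt c m) * Wv v c m"

lemma part1: "\<exists>a. in_image (L_AB A lft) (v - (\<Sum>c\<in>AB_cycles A. basis_vec (rep c) (a c)))"
proof -
  define w where "w = (\<chi> i. Wv v (cyc i) (idx i))"
  define a where "a c = v $ rep c - g (pt c (k c - 1)) * Wv v c (k c - 1)" for c
  have "L_AB A lft *v w = v - (\<Sum>c\<in>AB_cycles A. basis_vec (rep c) (a c))"
  proof (rule vec_eq_iff[THEN iffD2, rule_format])
    fix i
    show "(L_AB A lft *v w) $ i = (v - (\<Sum>c\<in>AB_cycles A. basis_vec (rep c) (a c))) $ i"
    proof (cases i rule: icases)
      case r
      then show ?thesis unfolding vector_minus_component Lmult rhs_comp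
        by (simp add: w_def a_def)
    next
      case (s m)
      then show ?thesis unfolding vector_minus_component Lmult rhs_comp by (simp add: w_def)
    qed
  qed
  then show ?thesis unfolding in_image_def by blast
qed

lemma part2a:
  assumes eq: "L_AB A lft *v w = (\<Sum>c\<in>AB_cycles A. basis_vec (rep c) (a c))"
    and c: "c \<in> AB_cycles A"
  shows "cycle_relator lft c dvd a c"
proof -
  have comp: "w $ i + g (B i) * w $ (B i) = (if isrep i then a (cyc i) else 0)" for i
    using arg_cong[OF eq, of "\<lambda>v. v $ i"] unfolding Lmult rhs_comp .
  have claim: "m < k c \<Longrightarrow> w $ pt c m = (-1) ^ m * P c m * w $ rep c" for m
  proof (induction m)
    case 0 then show ?case by (simp add: P0 pt0)
  next
    case (Suc m)
    let ?i = "pt c (Suc m)"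
    have ci: "cyc ?i = c" by (rule cyc_pt[OF c])
    have "idx ?i = Suc m" using idx_pt[OF c Suc.prems] .
    then obtain "\<not> isrep ?i" "B ?i = pt c m"
      by (cases ?i rule: icases) (auto simp: ci)
    with comp[of ?i] have "w $ ?i = - (g (pt c m) * w $ pt c m)"
      by (simp add: eq_neg_iff_add_eq_0)
    then show ?case using Suc by (simp add: PSuc algebra_simps)
  qed
  have ri: "isrep (rep c)" "cyc (rep c) = c" using cyc_rep[OF c] by (auto simp: isrep_def)
  have kp: "k c - 1 < k c" using cyc_param(2)[OF c] by simp
  have "a c = w $ rep c + g (pt c (k c - 1)) * w $ pt c (k c - 1)"
    using comp[of "rep c"] ri B_rep[OF c] by simp
  also have "\<dots> = cycle_relator lft c * w $ rep c"
    unfolding relator_eq[OF c] claim[OF kp] by (simp add: algebra_simps)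
  finally show ?thesis by simp
qed

lemma coef_L: "(L_AB A lft *v (\<chi> i. coef i * b (cyc i))) $ i
   = (if isrep i then cycle_relator lft (cyc i) * b (cyc i) else 0)"
proof (cases i rule: icases)
  case r
  then show ?thesis unfolding Lmult relator_eq[OF cyc_in]
    by (simp add: coef_def P0 algebra_simps)
next
  case (s m)
  then show ?thesis unfolding Lmult
    by (simp add: coef_def PSuc algebra_simps)
qed

lemma part2b:
  assumes dv: "\<forall>c\<in>AB_cycles A. cycle_relator lft c dvd a c"
  shows "in_image (L_AB A lft) (\<Sum>c\<in>AB_cycles A. basis_vec (rep c) (a c))"
proof -
  define b where "b c = (SOME d. a c = cycle_relator lft c * d)" for c
  have ab: "a c = cycle_relator lft c * b c" if "c \<in> AB_cycles A" for c
    using dv that unfolding b_def dvd_def by (metis (mono_tags, lifting) someI_ex)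
  have "L_AB A lft *v (\<chi> i. coef i * b (cyc i)) = (\<Sum>c\<in>AB_cycles A. basis_vec (rep c) (a c))"
    by (rule vec_eq_iff[THEN iffD2, rule_format]) (simp only: coef_L rhs_comp, simp add: ab cyc_in)
  then show ?thesis unfolding in_image_def by blast
qed

lemma det_diag_only:
  fixes X :: "'a::comm_ring_1 ^'n::finite^'n"
  assumes "\<And>p. p permutes UNIV \<Longrightarrow> p \<noteq> id \<Longrightarrow> \<exists>i. X $ i $ p i = 0"
  shows "det X = (\<Prod>i\<in>UNIV. X $ i $ i)"
proof -
  let ?f = "\<lambda>p. of_int (sign p) * (\<Prod>i\<in>UNIV. X $ i $ p i)"
  have fin: "finite {p. p permutes (UNIV::'n set)}" by (simp add: finite_permutations)
  have idin: "id \<in> {p. p permutes (UNIV::'n set)}" by (simp add: permutes_id)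
  have "det X = ?f id + sum ?f ({p. p permutes UNIV} - {id})"
    unfolding det_def using sum.remove[OF fin idin, of ?f] by simp
  also have "sum ?f ({p. p permutes UNIV} - {id}) = 0"
  proof (rule sum.neutral, rule ballI)
    fix p assume "p \<in> {p. p permutes (UNIV::'n set)} - {id}"
    then obtain i where "X $ i $ p i = 0" using assms by auto
    then have "(\<Prod>i\<in>UNIV. X $ i $ p i) = 0" by (intro prod_zero) auto
    then show "?f p = 0" by simp
  qed
  finally show ?thesis by simp
qed

definition "NN = (\<chi> i j. if isrep j \<and> cyc i = cyc j then coef i else (if i = j then 1 else 0))"

definition "MM = (\<chi> i j. if isrep j then (if i = j then cycle_relator lft (cyc j) else 0)
   else (if i = j then 1 else 0) + (if B i = j then g (B i) else 0))"

lemma mm_col: "(X ** Y) $ i $ j = (X *v (\<chi> l. Y $ l $ j)) $ i"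
  by (simp add: matrix_matrix_mult_def matrix_vector_mult_def)

lemma coef_rep: "isrep i \<Longrightarrow> coef i = 1"
  by (cases i rule: icases) (auto simp: coef_def P0)

lemma MM_eq: "L_AB A lft ** NN = MM"
proof (rule vec_eq_iff[THEN iffD2, rule_format], rule vec_eq_iff[THEN iffD2, rule_format])
  fix i j
  show "(L_AB A lft ** NN) $ i $ j = MM $ i $ j"
  proof (cases "isrep j")
    case True
    define bj where "bj = (\<lambda>c. if c = cyc j then 1 else (0::'g grpring))"
    have col: "(\<chi> l. NN $ l $ j) = (\<chi> l. coef l * bj (cyc l))"
      using True by (auto simp: NN_def vec_eq_iff bj_def)
    have "isrep i \<Longrightarrow> cyc i = cyc j \<Longrightarrow> i = j" using True by (metis isrep_def)
    then show ?thesis unfolding mm_col col coef_L using True by (auto simp: MM_def bj_def)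
  next
    case False
    have col: "(\<chi> l. NN $ l $ j) = (\<chi> l. if l = j then 1 else 0)"
      using False by (auto simp: NN_def vec_eq_iff)
    show ?thesis unfolding mm_col col Lmult using False by (auto simp: MM_def)
  qed
qed

lemma det_NN: "det NN = 1"
proof -
  have "det NN = (\<Prod>i\<in>UNIV. NN $ i $ i)"
  proof (rule det_diag_only, rule ccontr)
    fix p :: "'f \<Rightarrow> 'f" assume p: "p permutes UNIV" "p \<noteq> id" and nz: "\<not> (\<exists>i. NN $ i $ p i = 0)"
    obtain i where i: "p i \<noteq> i" using p(2) by (metis eq_id_iff)
    have "NN $ i $ p i \<noteq> 0" using nz by auto
    then have rj: "isrep (p i)" "cyc i = cyc (p i)" using i by (auto simp: NN_def split: if_splits)
    have "NN $ p i $ p (p i) \<noteq> 0" using nz by auto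
    then have "p (p i) = p i"
      by (auto simp: NN_def split: if_splits) (metis isrep_def rj(1))
    then have "p i = i" using permutes_inj[OF p(1)] by (auto dest: injD)
    with i show False by simp
  qed
  also have "\<dots> = 1" by (rule prod.neutral) (auto simp: NN_def coef_rep)
  finally show ?thesis .
qed

lemma det_MM: "det MM = (\<Prod>c\<in>AB_cycles A. cycle_relator lft c)"
proof -
  have "det MM = (\<Prod>i\<in>UNIV. MM $ i $ i)"
  proof (rule det_diag_only, rule ccontr)
    fix p :: "'f \<Rightarrow> 'f" assume p: "p permutes UNIV" "p \<noteq> id" and nz: "\<not> (\<exists>i. MM $ i $ p i = 0)"
    have cond: "p l = l \<or> (\<not> isrep (p l) \<and> p l = B l)" for l
    proof -
      have "MM $ l $ p l \<noteq> 0" using nz by auto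
      then show ?thesis by (auto simp: MM_def split: if_splits)
    qed
    have inj: "p x = p y \<Longrightarrow> x = y" for x y using permutes_inj[OF p(1)] by (auto dest: injD)
    obtain i0 where i0: "p i0 \<noteq> i0" using p(2) by (metis eq_id_iff)
    have chain: "p ((B ^^ n) i0) = (B ^^ Suc n) i0 \<and> (B ^^ Suc n) i0 \<noteq> (B ^^ n) i0
        \<and> \<not> isrep ((B ^^ Suc n) i0)" for n
    proof (induction n)
      case 0 then show ?case using cond[of i0] i0 by auto
    next
      case (Suc n)
      let ?y = "(B ^^ Suc n) i0" and ?z = "(B ^^ n) i0"
      have "p ?y \<noteq> ?y" using Suc inj[of ?y ?z] by auto
      then show ?case using cond[of ?y] by auto
    qed
    have "rep (cyc i0) \<in> orbit (inv A) i0"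
      using orbit_inv_eq[OF permA] cyc_orbit rep_in[OF cyc_in] by metis
    then obtain n where n: "rep (cyc i0) = (B ^^ n) i0" "0 < n"
      unfolding orbit_altdef B_def by auto
    then obtain m where m: "n = Suc m" by (cases n) auto
    have "isrep (rep (cyc i0))" using cyc_rep_cyc by (simp add: isrep_def)
    with chain[of m] n m show False by simp
  qed
  also have "\<dots> = (\<Prod>i\<in>UNIV. if isrep i then cycle_relator lft (cyc i) else 1)"
  proof (rule prod.cong)
    fix i show "MM $ i $ i = (if isrep i then cycle_relator lft (cyc i) else 1)"
      by (cases i rule: icases) (auto simp: MM_def)
  qed simp
  also have "\<dots> = (\<Prod>i\<in>{i. isrep i}. cycle_relator lft (cyc i))"
    using prod.inter_filter[of UNIV "\<lambda>i. cycle_relator lft (cyc i)" isrep] by simp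
  also have "{i. isrep i} = rep ` AB_cycles A"
    by (auto simp: isrep_def cyc_in cyc_rep)
  also have "(\<Prod>i\<in>rep ` AB_cycles A. cycle_relator lft (cyc i)) = (\<Prod>c\<in>AB_cycles A. cycle_relator lft c)"
  proof (subst prod.reindex)
    show "inj_on rep (AB_cycles A)" by (rule inj_onI) (metis cyc_rep)
  qed (simp add: cyc_rep)
  finally show ?thesis .
qed

lemma part3: "det (L_AB A lft) = (\<Prod>c\<in>AB_cycles A. cycle_relator lft c)"
  using det_mul[of "L_AB A lft" NN] MM_eq det_NN det_MM by simp

end

theorem mainTheorem15:
  fixes A :: "'f::finite \<Rightarrow> 'f"
    and lft :: "'f \<Rightarrow> 'g::ab_group_add"
    and rep :: "'f set \<Rightarrow> 'f"
  assumes "bij A"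
    and "\<forall>c\<in>AB_cycles A. rep c \<in> c"
  shows
    "(\<forall>v :: 'g grpring ^'f. \<exists>a :: 'f set \<Rightarrow> 'g grpring.
        in_image (L_AB A lft) (v - (\<Sum>c\<in>AB_cycles A. basis_vec (rep c) (a c))))
     \<and> (\<forall>a :: 'f set \<Rightarrow> 'g grpring.
        in_image (L_AB A lft) (\<Sum>c\<in>AB_cycles A. basis_vec (rep c) (a c))
        \<longleftrightarrow> (\<forall>c\<in>AB_cycles A. cycle_relator lft c dvd a c))
     \<and> (\<exists>u. u dvd 1 \<and>
        det (L_AB A lft) = u * (\<Prod>c\<in>AB_cycles A. cycle_relator lft c))"
proof -
  interpret ABs A lft rep using assms by unfold_locales
  show ?thesis
  proof (intro conjI allI)
    fix v :: "'g grpring ^'f"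
    show "\<exists>a. in_image (L_AB A lft) (v - (\<Sum>c\<in>AB_cycles A. basis_vec (rep c) (a c)))"
      by (rule part1)
  next
    fix a :: "'f set \<Rightarrow> 'g grpring"
    show "in_image (L_AB A lft) (\<Sum>c\<in>AB_cycles A. basis_vec (rep c) (a c))
        \<longleftrightarrow> (\<forall>c\<in>AB_cycles A. cycle_relator lft c dvd a c)"
      using part2a part2b unfolding in_image_def by blast
  next
    show "\<exists>u. u dvd 1 \<and> det (L_AB A lft) = u * (\<Prod>c\<in>AB_cycles A. cycle_relator lft c)"
      by (rule exI[of _ 1]) (simp add: part3)
  qed
qed

end
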